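(* Let $n\ge 2$ and let $\mathcal{P}(Q_{4n})$ be the power graph of the generalized quaternion group $Q_{4n}$. Then $-3\sqrt2$ is an eigenvalue of the Sombor matrix of $\mathcal{P}(Q_{4n})$ with multiplicity at least $n$.
   Context: For a finite simple graph $\Gamma$ with vertices $u_1,\dots,u_N$, the Sombor matrix $S(\Gamma)$ has $(i,j)$ entry $\sqrt{\deg(u_i)^2+\deg(u_j)^2}$ if $u_i,u_j$ are adjacent and $0$ otherwise. $Q_{4n}=\langle a,b: a^{2n}=e,\ a^n=b^2,\ ba=a^{-1}b\rangle$. The power graph $\mathcal{P}(G)$ of a group $G$ has vertex set $G$, two distinct vertices $x,y$ being adjacent iff $x\in\langle y\rangle$ or $y\in\langle x\rangle$. *)

theory Defs
  imports "HOL-Algebra.Generated_Groups" "Jordan_Normal_Form.Char_Poly"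
begin

definition power_adj :: "('g, 'b) monoid_scheme \<Rightarrow> 'g \<Rightarrow> 'g \<Rightarrow> bool" where
  "power_adj G x y \<longleftrightarrow> x \<in> carrier G \<and> y \<in> carrier G \<and> x \<noteq> y \<and>
     (x \<in> generate G {y} \<or> y \<in> generate G {x})"

definition gdeg :: "'a set \<Rightarrow> ('a \<Rightarrow> 'a \<Rightarrow> bool) \<Rightarrow> 'a \<Rightarrow> nat" where
  "gdeg V E x = card {y \<in> V. E x y}"

definition sombor_matrix :: "'a set \<Rightarrow> ('a \<Rightarrow> 'a \<Rightarrow> bool) \<Rightarrow> (nat \<Rightarrow> 'a) \<Rightarrow> real mat" where
  "sombor_matrix V E u = mat (card V) (card V) (\<lambda>(i, j).
      if E (u i) (u j) then sqrt (real (gdeg V E (u i))^2 + real (gdeg V E (u j))^2) else 0)"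

text \<open>Generalized quaternion group Q_{4n}: a group of order 4n generated by a, b
  subject to a^(2n) = e, a^n = b^2, b a = a^(-1) b (any such group is isomorphic
  to the presented group, which has order 4n).\<close>
definition is_gen_quaternion :: "('g, 'b) monoid_scheme \<Rightarrow> nat \<Rightarrow> bool" where
  "is_gen_quaternion G n \<longleftrightarrow> group G \<and> finite (carrier G) \<and> card (carrier G) = 4 * n \<and>
     (\<exists>a\<in>carrier G. \<exists>b\<in>carrier G. generate G {a, b} = carrier G \<and>
        a [^]\<^bsub>G\<^esub> (2 * n) = \<one>\<^bsub>G\<^esub> \<and> a [^]\<^bsub>G\<^esub> n = b [^]\<^bsub>G\<^esub> (2::nat) \<and>
        b \<otimes>\<^bsub>G\<^esub> a = inv\<^bsub>G\<^esub> a \<otimes>\<^bsub>G\<^esub> b)"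

end

theory Submission
  imports Defs
begin


lemma const_poly_sum: "(\<Sum>i\<in>S. [:f i:]) = [:(\<Sum>i\<in>S. f i):]"
  by (induct S rule: infinite_finite_induct) auto

lemma sum_delta_aux: "(\<Sum>l = 0..<(N::nat). f l * (if l = z then 1 else (0::'a::comm_ring_1))) = (if z < N then f z else 0)"
  by (induct N) (auto simp: less_Suc_eq)

lemma geo_mult_bound:
  fixes A :: "'a::field mat" and x y :: "nat \<Rightarrow> nat"
  assumes A: "A \<in> carrier_mat N N"
  and xy: "\<And>k. k < m \<Longrightarrow> x k < y k \<and> y k < N"
  and injx: "inj_on x {..<m}"
  and yx: "\<And>k j. k < m \<Longrightarrow> j < m \<Longrightarrow> y k \<noteq> x j"
  and eig: "\<And>k r. k < m \<Longrightarrow> r < N \<Longrightarrow> A $$ (r, x k) - A $$ (r, y k)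
      = c * ((if r = x k then 1 else 0) - (if r = y k then 1 else 0))"
  shows "m \<le> order c (char_poly A)"
proof -
  define S where "S = x ` {..<m}"
  have cardS: "card S = m" unfolding S_def using injx by (simp add: card_image)
  have SN: "S \<subseteq> {..<N}" unfolding S_def using xy by force
  define P where "P = mat N N (\<lambda>(i,j). if i = j then 1 else if (\<exists>k<m. j = x k \<and> i = y k) then -1 else (0::'a))"
  have P: "P \<in> carrier_mat N N" unfolding P_def by simp
  have Pcol: "P $$ (l, x k) = (if l = x k then 1 else 0) - (if l = y k then 1 else 0)"
    if "k < m" "l < N" for k l
  proof -
    have xN: "x k < N" using xy[OF that(1)] by simp
    have "(\<exists>k'<m. x k = x k' \<and> l = y k') \<longleftrightarrow> l = y k"
      using injx that(1) by (auto simp: inj_on_def)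
    then show ?thesis using that xN xy[OF that(1)] unfolding P_def by auto
  qed
  have AP: "(A * P) $$ (i, j) = c * P $$ (i, j)" if "i < N" "j \<in> S" for i j
  proof -
    obtain k where k: "k < m" "j = x k" using \<open>j \<in> S\<close> unfolding S_def by auto
    have "(A * P) $$ (i, j) = (\<Sum>l = 0..<N. A $$ (i, l) * P $$ (l, j))"
      using A P that SN by (auto simp: scalar_prod_def)
    also have "\<dots> = (\<Sum>l = 0..<N. A $$ (i, l) * ((if l = x k then 1 else 0) - (if l = y k then 1 else 0)))"
      by (rule sum.cong, auto simp: Pcol k)
    also have "\<dots> = A $$ (i, x k) - A $$ (i, y k)"
      using xy[OF k(1)] by (simp add: right_diff_distrib sum_subtractf sum_delta_aux)
    also have "\<dots> = c * P $$ (i, j)" using eig[OF k(1) that(1)] Pcol[OF k(1) that(1)] k by simp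
    finally show ?thesis .
  qed
  define PP where "PP = map_mat (\<lambda>a. [:a:]) P"
  define M where "M = char_poly_matrix A"
  have M: "M \<in> carrier_mat N N" unfolding M_def using A by simp
  have PP: "PP \<in> carrier_mat N N" unfolding PP_def using P by simp
  have PPe: "PP $$ (l, j) = [:P $$ (l,j):]" if "l < N" "j < N" for l j
    unfolding PP_def using P that by simp
  define q where "q = [:-c, 1:]"
  define D where "D = mat N N (\<lambda>(i,j). if i = j then (if j \<in> S then q else 1) else 0)"
  define C where "C = mat N N (\<lambda>(i,j). if j \<in> S then [:P $$ (i,j):] else (M * PP) $$ (i,j))"
  have D: "D \<in> carrier_mat N N" unfolding D_def by simp
  have C: "C \<in> carrier_mat N N" unfolding C_def by simp
  have MPP: "(M * PP) $$ (i, j) = [:P $$ (i,j):] * q" if "i < N" "j \<in> S" for i j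
  proof -
    have jN: "j < N" using that SN by auto
    have "(M * PP) $$ (i, j) = (\<Sum>l = 0..<N. M $$ (i, l) * PP $$ (l, j))"
      using M PP that jN by (auto simp: scalar_prod_def)
    also have "\<dots> = (\<Sum>l = 0..<N. (if l = i then [:0, P $$ (i, j):] else 0) + [:- (A $$ (i,l) * P $$ (l,j)):])"
      by (rule sum.cong, insert A that jN, auto simp: M_def PPe char_poly_matrix_def algebra_simps)
    also have "\<dots> = [:0, P $$ (i, j):] + [:- (A * P) $$ (i, j):]"
      using A P that jN by (simp add: sum.distrib const_poly_sum sum_negf scalar_prod_def)
    also have "\<dots> = [:P $$ (i,j):] * q"
      using AP[OF that] by (simp add: q_def algebra_simps)
    finally show ?thesis .
  qed
  have MCD: "M * PP = C * D"
  proof (rule eq_matI)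
    fix i j assume ij: "i < dim_row (C * D)" "j < dim_col (C * D)"
    hence i: "i < N" and j: "j < N" using C D by auto
    have "(C * D) $$ (i, j) = (\<Sum>l = 0..<N. C $$ (i, l) * D $$ (l, j))"
      using C D i j by (auto simp: scalar_prod_def)
    also have "\<dots> = (\<Sum>l = 0..<N. if l = j then C $$ (i, j) * D $$ (j, j) else 0)"
      by (rule sum.cong) (use j in \<open>auto simp: D_def\<close>)
    also have "\<dots> = C $$ (i, j) * D $$ (j, j)" using j by simp
    also have "\<dots> = (M * PP) $$ (i, j)"
      using i j MPP[OF i] by (auto simp: C_def D_def)
    finally show "(M * PP) $$ (i, j) = (C * D) $$ (i, j)" ..
  qed (use M PP C D in auto)
  have detPP: "det PP = 1"
  proof -
    have "det PP = prod_list (diag_mat PP)"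
    proof (rule det_lower_triangular[OF _ PP])
      fix i j assume "i < j" "j < N"
      then show "PP $$ (i, j) = 0" using P xy unfolding PP_def P_def by fastforce
    qed
    also have "\<dots> = 1" unfolding prod_list_diag_prod using PP
      by (intro prod.neutral) (auto simp: PP_def P_def)
    finally show ?thesis .
  qed
  have detD: "det D = q ^ m"
  proof -
    have "det D = prod_list (diag_mat D)"
      by (rule det_upper_triangular[OF _ D]) (auto simp: upper_triangular_def D_def)
    also have "\<dots> = (\<Prod>i = 0..<N. if i \<in> S then q else 1)"
      unfolding prod_list_diag_prod using D by (intro prod.cong) (auto simp: D_def)
    also have "\<dots> = q ^ card ({0..<N} \<inter> S)"
      by (simp add: prod.If_cases)
    also have "{0..<N} \<inter> S = S" using SN by auto
    finally show ?thesis using cardS by simp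
  qed
  have "char_poly A = det C * q ^ m"
  proof -
    have "char_poly A = det M * det PP" unfolding char_poly_def M_def detPP by simp
    also have "\<dots> = det (M * PP)" using det_mult[OF M PP] by simp
    also have "\<dots> = det C * det D" unfolding MCD using det_mult[OF C D] .
    finally show ?thesis using detD by simp
  qed
  hence "q ^ m dvd char_poly A" by simp
  thus ?thesis unfolding q_def order_divides
    using degree_monic_char_poly[OF A] by auto
qed



lemma (in group) pow_mod_gen:
  assumes x: "x \<in> carrier G" and xm: "x [^] (m::nat) = \<one>" and m: "m > 0"
  shows "x [^] (k::int) = x [^] (k mod int m)"
proof -
  have "k = int m * (k div int m) + k mod int m" by simp
  hence "x [^] k = x [^] (int m * (k div int m)) \<otimes> x [^] (k mod int m)"
    by (metis int_pow_mult x)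
  also have "x [^] (int m * (k div int m)) = \<one>"
    by (simp add: int_pow_pow[OF x, symmetric] int_pow_int xm)
  finally show ?thesis using x by simp
qed

locale quat = group G for G (structure) +
  fixes a b and n :: nat
  assumes a: "a \<in> carrier G" and b: "b \<in> carrier G"
  and gen: "generate G {a, b} = carrier G"
  and fin: "finite (carrier G)" and card: "card (carrier G) = 4 * n"
  and an: "a [^] (2 * n) = \<one>" and ab: "a [^] n = b [^] (2::nat)"
  and ba: "b \<otimes> a = inv a \<otimes> b" and n1: "n \<ge> 1"
begin

definition rho :: "int \<Rightarrow> 'a" where "rho i = a [^] i"
definition sig :: "int \<Rightarrow> 'a" where "sig i = a [^] i \<otimes> b"

lemma rho_c[simp]: "rho i \<in> carrier G" unfolding rho_def using a by simp
lemma sig_c[simp]: "sig i \<in> carrier G" unfolding sig_def using a b by simp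

lemma bb: "b \<otimes> b = rho (int n)"
  using ab b unfolding rho_def by (simp add: int_pow_int numeral_2_eq_2)

lemma b_inva: "b \<otimes> inv a = a \<otimes> b"
proof -
  have "b \<otimes> a \<otimes> inv a = inv a \<otimes> b \<otimes> inv a" using ba by simp
  hence e: "b = inv a \<otimes> b \<otimes> inv a" using a b by (simp add: m_assoc)
  have "a \<otimes> b = a \<otimes> (inv a \<otimes> b \<otimes> inv a)" using e by simp
  also have "\<dots> = b \<otimes> inv a" using a b by (simp add: m_assoc[symmetric])
  finally show ?thesis ..
qed

lemma b_rho: "b \<otimes> rho i = rho (- i) \<otimes> b"
proof (induct i rule: int_induct[where k=0])
  case base then show ?case using b unfolding rho_def by simp
next
  case (step1 i)
  have "b \<otimes> rho (i + 1) = (b \<otimes> rho i) \<otimes> a" using a b unfolding rho_def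
    by (simp add: int_pow_mult m_assoc)
  also have "\<dots> = rho (- i) \<otimes> (b \<otimes> a)" using step1 a b by (simp add: m_assoc)
  also have "\<dots> = rho (- i) \<otimes> inv a \<otimes> b" using ba a b by (simp add: m_assoc)
  also have "\<dots> = rho (- (i + 1)) \<otimes> b" using a int_pow_mult[OF a, of "-i" "-1"] int_pow_neg[OF a, of 1]
    unfolding rho_def by (simp add: algebra_simps)
  finally show ?case .
next
  case (step2 i)
  have "b \<otimes> rho (i - 1) = (b \<otimes> rho i) \<otimes> inv a" using a b unfolding rho_def
    by (simp add: int_pow_diff m_assoc)
  also have "\<dots> = rho (- i) \<otimes> (b \<otimes> inv a)" using step2 a b by (simp add: m_assoc)
  also have "\<dots> = rho (- i) \<otimes> a \<otimes> b" using b_inva a b by (simp add: m_assoc)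
  also have "\<dots> = rho (- (i - 1)) \<otimes> b" using a int_pow_mult[OF a, of "-i" "1"]
    unfolding rho_def by (simp add: algebra_simps)
  finally show ?case .
qed

lemma rr: "rho i \<otimes> rho j = rho (i + j)" unfolding rho_def using a by (simp add: int_pow_mult)
lemma rs: "rho i \<otimes> sig j = sig (i + j)" unfolding rho_def sig_def using a b
  by (simp add: int_pow_mult m_assoc)
lemma sr: "sig i \<otimes> rho j = sig (i - j)"
proof -
  have "sig i \<otimes> rho j = rho i \<otimes> (b \<otimes> rho j)" unfolding sig_def rho_def using a b by (simp add: m_assoc)
  also have "\<dots> = sig (i - j)" using b_rho rs a b
    by (simp add: m_assoc[symmetric] rr) (simp add: rho_def sig_def m_assoc)
  finally show ?thesis .
qed
lemma ss: "sig i \<otimes> sig j = rho (i - j + int n)"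
proof -
  have "sig i \<otimes> sig j = (sig i \<otimes> rho j) \<otimes> b" unfolding sig_def rho_def using a b by (simp add: m_assoc)
  also have "\<dots> = rho (i - j) \<otimes> (b \<otimes> b)" unfolding sr unfolding sig_def rho_def using a b by (simp add: m_assoc)
  also have "\<dots> = rho (i - j + int n)" unfolding bb rr ..
  finally show ?thesis .
qed

lemma inv_a: "inv a = rho (-1)" unfolding rho_def using a by (simp add: int_pow_neg)
lemma inv_b: "inv b = sig (- int n)"
proof -
  have "sig (- int n) \<otimes> b = \<one>" unfolding sig_def using a b
    by (simp add: m_assoc bb rho_def int_pow_mult[symmetric])
  thus ?thesis using b by (simp add: inv_equality)
qed

lemma carrier_T: "carrier G = range rho \<union> range sig"
proof
  show "carrier G \<subseteq> range rho \<union> range sig"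
    unfolding gen[symmetric]
  proof
    fix x assume "x \<in> generate G {a, b}"
    then show "x \<in> range rho \<union> range sig"
    proof induct
      case one then show ?case by (metis UnI1 int_pow_0 rangeI rho_def)
    next
      case (incl h) then show ?case
        by (auto, metis a int_pow_1 rangeI rho_def, metis a b int_pow_0 l_one rangeI sig_def)
    next
      case (inv h) then show ?case using inv_a inv_b by auto
    next
      case (eng h1 h2) then show ?case using rr rs sr ss by auto
    qed
  qed
qed auto

lemma rho_mod: "rho i = rho (i mod (2 * int n))"
  unfolding rho_def using pow_mod_gen[OF a an] n1 by simp
lemma sig_mod: "sig i = sig (i mod (2 * int n))"
  unfolding sig_def using pow_mod_gen[OF a an] n1 by simp

lemma counting:
  "inj_on rho {0..<2 * int n} \<and> inj_on sig {0..<2 * int n} \<and> rho ` {0..<2 * int n} \<inter> sig ` {0..<2 * int n} = {}"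
proof -
  let ?I = "{0..<2 * int n}"
  have cI: "card ?I = 2 * n" by simp
  have C: "carrier G = rho ` ?I \<union> sig ` ?I"
  proof
    show "carrier G \<subseteq> rho ` ?I \<union> sig ` ?I"
    proof
      fix x assume "x \<in> carrier G"
      then consider i where "x = rho i" | i where "x = sig i" using carrier_T by auto
      then show "x \<in> rho ` ?I \<union> sig ` ?I"
      proof cases
        case 1 then show ?thesis using rho_mod[of i] n1
          by (intro UnI1 image_eqI[where x="i mod (2 * int n)"]) auto
      next
        case 2 then show ?thesis using sig_mod[of i] n1
          by (intro UnI2 image_eqI[where x="i mod (2 * int n)"]) auto
      qed
    qed
  qed auto
  have f1: "card (rho ` ?I) \<le> 2 * n" using card_image_le[of ?I rho] cI by simp
  have f2: "card (sig ` ?I) \<le> 2 * n" using card_image_le[of ?I sig] cI by simp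
  have U: "card (rho ` ?I) + card (sig ` ?I) = card (rho ` ?I \<union> sig ` ?I) + card (rho ` ?I \<inter> sig ` ?I)"
    by (rule card_Un_Int) auto
  have cu: "card (rho ` ?I \<union> sig ` ?I) = 4 * n" using C card by simp
  have e: "card (rho ` ?I) = 2 * n" "card (sig ` ?I) = 2 * n" and e3: "card (rho ` ?I \<inter> sig ` ?I) = 0"
    using U cu f1 f2 by linarith+
  have dj: "rho ` ?I \<inter> sig ` ?I = {}" using e3 by (subst (asm) card_0_eq) auto
  show ?thesis
    using e dj eq_card_imp_inj_on[of ?I rho] eq_card_imp_inj_on[of ?I sig] cI by simp
qed

lemma rho_eq: "rho i = rho j \<longleftrightarrow> (2 * int n) dvd (i - j)"
proof
  assume "rho i = rho j"
  hence "rho (i mod (2 * int n)) = rho (j mod (2 * int n))" using rho_mod by metis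
  hence "i mod (2 * int n) = j mod (2 * int n)"
    using counting n1 by (auto simp: inj_on_def)
  thus "(2 * int n) dvd (i - j)" by (simp add: mod_eq_dvd_iff)
next
  assume "(2 * int n) dvd (i - j)"
  hence "i mod (2 * int n) = j mod (2 * int n)" by (simp add: mod_eq_dvd_iff)
  thus "rho i = rho j" using rho_mod by metis
qed

lemma sig_eq: "sig i = sig j \<longleftrightarrow> (2 * int n) dvd (i - j)"
proof
  assume "sig i = sig j"
  hence "sig (i mod (2 * int n)) = sig (j mod (2 * int n))" using sig_mod by metis
  hence "i mod (2 * int n) = j mod (2 * int n)"
    using counting n1 by (auto simp: inj_on_def)
  thus "(2 * int n) dvd (i - j)" by (simp add: mod_eq_dvd_iff)
next
  assume "(2 * int n) dvd (i - j)"
  hence "i mod (2 * int n) = j mod (2 * int n)" by (simp add: mod_eq_dvd_iff)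
  thus "sig i = sig j" using sig_mod by metis
qed

lemma rho_ne_sig: "rho i \<noteq> sig j"
proof
  assume "rho i = sig j"
  hence "rho (i mod (2 * int n)) = sig (j mod (2 * int n))" using rho_mod sig_mod by metis
  moreover have "rho (i mod (2 * int n)) \<in> rho ` {0..<2 * int n}" using n1 by auto
  moreover have "sig (j mod (2 * int n)) \<in> sig ` {0..<2 * int n}" using n1 by auto
  ultimately show False using counting by auto
qed


lemma rho0: "rho 0 = \<one>" unfolding rho_def by simp

lemma gen_rho: "generate G {rho j} \<subseteq> range rho"
proof
  fix x assume "x \<in> generate G {rho j}"
  then obtain k where "x = (rho j) [^] (k::int)" using generate_pow[OF rho_c] by auto
  then have "x = rho (j * k)" unfolding rho_def using int_pow_pow[OF a] by simp
  thus "x \<in> range rho" by simp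
qed

lemma gen_sig: "generate G {sig i} = {rho 0, sig i, rho (int n), sig (i + int n)}"
proof -
  let ?x = "sig i"
  have x2: "?x \<otimes> ?x = rho (int n)" using ss by simp
  have x3: "?x \<otimes> ?x \<otimes> ?x = sig (i + int n)" unfolding x2 rs by (simp add: add.commute)
  have x4: "?x [^] (4::nat) = \<one>"
  proof -
    have sq: "?x [^] (2::nat) = ?x \<otimes> ?x" by (simp add: numeral_2_eq_2)
    have e4: "(2::nat) + 2 = 4" by simp
    have "?x [^] (4::nat) = ?x [^] (2::nat) \<otimes> ?x [^] (2::nat)"
      using nat_pow_mult[OF sig_c, of i 2 2] unfolding e4 by (rule sym)
    hence "?x [^] (4::nat) = (?x \<otimes> ?x) \<otimes> (?x \<otimes> ?x)" unfolding sq .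
    also have "\<dots> = rho (2 * int n)" unfolding x2 rr by simp
    also have "\<dots> = rho 0" by (subst rho_eq) simp
    finally show ?thesis using rho0 by simp
  qed
  show ?thesis
  proof
    show "generate G {?x} \<subseteq> {rho 0, ?x, rho (int n), sig (i + int n)}"
    proof
      fix y assume "y \<in> generate G {?x}"
      then obtain k where "y = ?x [^] (k::int)" using generate_pow[OF sig_c] by auto
      have "(4::int) > 0" by simp
      have "?x [^] (nat (k mod 4)) = ?x [^] (k mod 4)" by (rule pow_nat) simp
      also have "\<dots> = ?x [^] k" using pow_mod_gen[OF sig_c x4, of k] by simp
      finally have y: "y = ?x [^] (nat (k mod 4))" using \<open>y = ?x [^] k\<close> by simp
      have "nat (k mod 4) < 4" by simp
      then consider "nat (k mod 4) = 0" | "nat (k mod 4) = 1" | "nat (k mod 4) = 2" | "nat (k mod 4) = 3" by linarith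
      then show "y \<in> {rho 0, ?x, rho (int n), sig (i + int n)}"
      proof cases
        case 1 then show ?thesis using y rho0 by simp
      next
        case 2 then show ?thesis using y by simp
      next
        case 3
        have "?x [^] (2::nat) = ?x \<otimes> ?x" by (simp add: numeral_2_eq_2)
        then show ?thesis using y x2 3 by simp
      next
        case 4
        have "?x [^] (3::nat) = ?x \<otimes> ?x \<otimes> ?x" by (simp add: numeral_3_eq_3)
        then show ?thesis using y x3 4 by simp
      qed
    qed
  next
    have "rho 0 \<in> generate G {?x}" using rho0 generate.one by metis
    moreover have "?x \<in> generate G {?x}" by (simp add: generate.incl)
    moreover have g2: "rho (int n) \<in> generate G {?x}"
    proof -
      have "?x \<otimes> ?x \<in> generate G {?x}" by (intro generate.eng generate.incl) simp_all
      thus ?thesis unfolding x2 .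
    qed
    moreover have "sig (i + int n) \<in> generate G {?x}"
    proof -
      have "?x \<otimes> ?x \<otimes> ?x \<in> generate G {?x}" by (intro generate.eng generate.incl) simp_all
      thus ?thesis unfolding x3 .
    qed
    ultimately show "{rho 0, ?x, rho (int n), sig (i + int n)} \<subseteq> generate G {?x}" by auto
  qed
qed


lemma dvd_shift: "(2 * int n) dvd (i - (j + int n)) \<Longrightarrow> (2 * int n) dvd (j - (i + int n))"
proof -
  assume "(2 * int n) dvd (i - (j + int n))"
  then obtain c where c: "i - (j + int n) = 2 * int n * c" by (auto elim: dvdE)
  have "j - (i + int n) = 2 * int n * (- c - 1)" using c by (simp add: algebra_simps)
  thus ?thesis by simp
qed

lemma n_not_dvd: "\<not> (2 * int n) dvd (int n)"
proof
  assume "(2 * int n) dvd (int n)"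
  then have "2 * int n \<le> int n" using n1 by (intro zdvd_imp_le) auto
  thus False using n1 by simp
qed

lemma sig_ne: "sig (i + int n) \<noteq> sig i"
  using n_not_dvd by (simp add: sig_eq)

lemma sig_ne_rho: "sig j \<noteq> rho i" using rho_ne_sig by metis
lemma sig_ne': "sig i \<noteq> sig (i + int n)" using sig_ne by metis

lemma rho_ne: "rho 0 \<noteq> rho (int n)"
  using n_not_dvd by (simp add: rho_eq)

lemma in_gen_sig_imp:
  assumes y: "y \<in> carrier G" and s: "sig i \<in> generate G {y}"
  shows "y = sig i \<or> y = sig (i + int n)"
proof -
  consider j where "y = rho j" | j where "y = sig j" using y carrier_T by auto
  then show ?thesis
  proof cases
    case 1
    then show ?thesis using s gen_rho[of j] rho_ne_sig by (metis imageE subsetD)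
  next
    case 2
    then have "sig i \<in> {rho 0, sig j, rho (int n), sig (j + int n)}" using s gen_sig by simp
    then have "sig i = sig j \<or> sig i = sig (j + int n)" using sig_ne_rho by simp
    then show ?thesis
    proof
      assume "sig i = sig j" then show ?thesis using 2 by simp
    next
      assume "sig i = sig (j + int n)"
      then have "(2 * int n) dvd (j - (i + int n))" using dvd_shift by (simp add: sig_eq)
      then show ?thesis using 2 by (simp add: sig_eq)
    qed
  qed
qed

lemma adj_char: "power_adj G (sig i) y \<longleftrightarrow> y \<in> {rho 0, rho (int n), sig (i + int n)}"
proof
  assume A: "power_adj G (sig i) y"
  then have y: "y \<in> carrier G" "y \<noteq> sig i" and o: "sig i \<in> generate G {y} \<or> y \<in> generate G {sig i}"
    unfolding power_adj_def by auto
  from o show "y \<in> {rho 0, rho (int n), sig (i + int n)}"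
  proof
    assume "sig i \<in> generate G {y}"
    then show ?thesis using in_gen_sig_imp[OF y(1)] y(2) by auto
  next
    assume "y \<in> generate G {sig i}"
    then show ?thesis using y(2) gen_sig by auto
  qed
next
  assume "y \<in> {rho 0, rho (int n), sig (i + int n)}"
  moreover then have "y \<noteq> sig i" using sig_ne_rho sig_ne' by auto
  ultimately show "power_adj G (sig i) y" unfolding power_adj_def gen_sig by auto
qed

lemma deg_sig: "gdeg (carrier G) (power_adj G) (sig i) = 3"
proof -
  have "{y \<in> carrier G. power_adj G (sig i) y} = {rho 0, rho (int n), sig (i + int n)}"
    using adj_char by auto
  moreover have "card {rho 0, rho (int n), sig (i + int n)} = 3"
    using rho_ne rho_ne_sig by simp
  ultimately show ?thesis unfolding gdeg_def by simp
qed

lemma adj_sym: "power_adj G x y = power_adj G y x"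
  unfolding power_adj_def by auto

lemma adj_equiv:
  assumes "y \<noteq> sig i" "y \<noteq> sig (i + int n)"
  shows "power_adj G y (sig i) \<longleftrightarrow> power_adj G y (sig (i + int n))"
proof -
  have e: "sig (i + int n + int n) = sig i" by (simp add: sig_eq)
  show ?thesis using adj_char[of i y] adj_char[of "i + int n" y] assms adj_sym e by auto
qed

lemma adj_pair: "power_adj G (sig i) (sig (i + int n))"
  using adj_char by simp


lemma dvd_small: "(m::int) dvd d \<Longrightarrow> \<bar>d\<bar> < m \<Longrightarrow> d = 0"
proof (rule ccontr)
  assume "m dvd d" "\<bar>d\<bar> < m" "d \<noteq> 0"
  then have "\<bar>m\<bar> \<le> \<bar>d\<bar>" using dvd_imp_le_int by blast
  then show False using \<open>\<bar>d\<bar> < m\<close> by linarith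
qed

lemma pair_disj:
  assumes k: "k < n" and j: "j < n" and zk: "z \<in> {sig (int k), sig (int k + int n)}" and zj: "z \<in> {sig (int j), sig (int j + int n)}"
  shows "k = j"
proof -
  have b1: "\<bar>int k - int j\<bar> < 2 * int n" using k j by (simp add: abs_less_iff)
  have b2: "\<bar>int k - (int j + int n)\<bar> < 2 * int n" using k j by (simp add: abs_less_iff)
  have b3: "\<bar>int k + int n - int j\<bar> < 2 * int n" using k j by (simp add: abs_less_iff)
  have n2: "int k - (int j + int n) \<noteq> 0" "int k + int n - int j \<noteq> 0" using k j by linarith+
  from zk zj consider "sig (int k) = sig (int j)" | "sig (int k) = sig (int j + int n)"
    | "sig (int k + int n) = sig (int j)" | "sig (int k + int n) = sig (int j + int n)" by blast
  then show ?thesis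
  proof cases
    case 1
    then have "(2 * int n) dvd (int k - int j)" by (simp only: sig_eq)
    then show ?thesis using dvd_small[OF _ b1] by simp
  next
    case 2
    then have "(2 * int n) dvd (int k - (int j + int n))" by (simp only: sig_eq)
    then show ?thesis using dvd_small[OF _ b2] n2 by blast
  next
    case 3
    then have "(2 * int n) dvd (int k + int n - int j)" by (simp only: sig_eq)
    then show ?thesis using dvd_small[OF _ b3] n2 by blast
  next
    case 4
    then have "(2 * int n) dvd (int k + int n - (int j + int n))" by (simp only: sig_eq)
    then have "(2 * int n) dvd (int k - int j)" by simp
    then show ?thesis using dvd_small[OF _ b1] by simp
  qed
qed

end



theorem theorem6p4:
  fixes G :: "('g, 'b) monoid_scheme" and n :: nat and u :: "nat \<Rightarrow> 'g"
  assumes "n \<ge> 2"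
    and "is_gen_quaternion G n"
    and "bij_betw u {..<card (carrier G)} (carrier G)"
  shows "eigenvalue (sombor_matrix (carrier G) (power_adj G) u) (- 3 * sqrt 2)
     \<and> order (- 3 * sqrt 2) (char_poly (sombor_matrix (carrier G) (power_adj G) u)) \<ge> n"
proof -
  from assms(2) obtain a b where grp: "group G" and fin: "finite (carrier G)" and cd: "card (carrier G) = 4 * n"
    and a: "a \<in> carrier G" and b: "b \<in> carrier G" and gen: "generate G {a, b} = carrier G"
    and an: "a [^]\<^bsub>G\<^esub> (2 * n) = \<one>\<^bsub>G\<^esub>" and ab: "a [^]\<^bsub>G\<^esub> n = b [^]\<^bsub>G\<^esub> (2::nat)"
    and ba: "b \<otimes>\<^bsub>G\<^esub> a = inv\<^bsub>G\<^esub> a \<otimes>\<^bsub>G\<^esub> b"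
    unfolding is_gen_quaternion_def by blast
  interpret Q: quat G a b n
    using assms(1) by (intro quat.intro quat_axioms.intro grp a b gen fin cd an ab ba) simp
  define N where "N = card (carrier G)"
  define A where "A = sombor_matrix (carrier G) (power_adj G) u"
  define c :: real where "c = - 3 * sqrt 2"
  define v where "v = inv_into {..<N} u"
  have bij: "bij_betw u {..<N} (carrier G)" using assms(3) unfolding N_def .
  have A: "A \<in> carrier_mat N N" unfolding A_def N_def sombor_matrix_def by simp
  have Aent: "A $$ (r, s) = (if power_adj G (u r) (u s) then
      sqrt (real (gdeg (carrier G) (power_adj G) (u r))^2 + real (gdeg (carrier G) (power_adj G) (u s))^2) else 0)"
    if "r < N" "s < N" for r s
    using that unfolding A_def N_def sombor_matrix_def by simp
  have vN: "v z < N" if "z \<in> carrier G" for z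
  proof -
    have "v z \<in> {..<N}" unfolding v_def
      by (rule inv_into_into) (use that bij in \<open>auto simp: bij_betw_def\<close>)
    thus ?thesis by simp
  qed
  have uv: "u (v z) = z" if "z \<in> carrier G" for z
    using that bij unfolding v_def by (simp add: bij_betw_inv_into_right)
  have vu: "v (u r) = r" if "r < N" for r
    using that bij unfolding v_def by (auto simp: bij_betw_def)
  have s18: "sqrt (real (3::nat) ^ 2 + real (3::nat) ^ 2) = - c"
  proof -
    have "real (3::nat) ^ 2 + real (3::nat) ^ 2 = 3 ^ 2 * 2" by simp
    moreover have "sqrt ((3::real) ^ 2 * 2) = 3 * sqrt 2" by (simp only: real_sqrt_mult) simp
    ultimately show ?thesis unfolding c_def by simp
  qed
  have key: "A $$ (r, v (Q.sig i)) - A $$ (r, v (Q.sig (i + int n)))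
      = c * ((if r = v (Q.sig i) then 1 else 0) - (if r = v (Q.sig (i + int n)) then 1 else 0))"
    if r: "r < N" for r i
  proof -
    let ?p = "Q.sig i" and ?q = "Q.sig (i + int n)"
    have ip: "v ?p < N" "u (v ?p) = ?p" using vN uv by simp_all
    have iq: "v ?q < N" "u (v ?q) = ?q" using vN uv by simp_all
    have dp: "gdeg (carrier G) (power_adj G) ?p = 3" by (rule Q.deg_sig)
    have dq: "gdeg (carrier G) (power_adj G) ?q = 3" by (rule Q.deg_sig)
    have pq: "v ?p \<noteq> v ?q" using ip iq Q.sig_ne' by metis
    have npp: "\<not> power_adj G ?p ?p" unfolding power_adj_def by simp
    have nqq: "\<not> power_adj G ?q ?q" unfolding power_adj_def by simp
    have apq: "power_adj G ?p ?q" by (rule Q.adj_pair)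
    have aqp: "power_adj G ?q ?p" using apq Q.adj_sym by metis
    consider "r = v ?p" | "r = v ?q" | "r \<noteq> v ?p" "r \<noteq> v ?q" by blast
    then show ?thesis
    proof cases
      case 1
      then show ?thesis using Aent[OF r ip(1)] Aent[OF r iq(1)] ip iq dp dq pq npp apq s18 by simp
    next
      case 2
      then show ?thesis using Aent[OF r ip(1)] Aent[OF r iq(1)] ip iq dp dq pq nqq aqp s18 by simp
    next
      case 3
      have "u r \<noteq> ?p" "u r \<noteq> ?q" using 3 vu[OF r] by metis+
      then have "power_adj G (u r) ?p \<longleftrightarrow> power_adj G (u r) ?q" by (rule Q.adj_equiv)
      then show ?thesis using Aent[OF r ip(1)] Aent[OF r iq(1)] ip iq dp dq 3 by simp
    qed
  qed
  define x where "x k = min (v (Q.sig (int k))) (v (Q.sig (int k + int n)))" for k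
  define y where "y k = max (v (Q.sig (int k))) (v (Q.sig (int k + int n)))" for k
  have uxy: "u (x k) \<in> {Q.sig (int k), Q.sig (int k + int n)}" "u (y k) \<in> {Q.sig (int k), Q.sig (int k + int n)}" for k
    unfolding x_def y_def min_def max_def using uv by auto
  have pqne: "v (Q.sig (int k)) \<noteq> v (Q.sig (int k + int n))" for k
    using uv Q.sig_ne' by (metis Q.sig_c)
  have ord: "n \<le> order c (char_poly A)"
  proof (rule geo_mult_bound[OF A])
    fix k assume "k < n"
    show "x k < y k \<and> y k < N" unfolding x_def y_def using pqne[of k] vN by (auto simp: min_def max_def)
  next
    show "inj_on x {..<n}"
    proof (rule inj_onI)
      fix k j assume "k \<in> {..<n}" "j \<in> {..<n}" "x k = x j"
      then show "k = j" using Q.pair_disj[of k j "u (x k)"] uxy[of k] uxy[of j] by auto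
    qed
  next
    fix k j assume kj: "k < n" "j < n"
    show "y k \<noteq> x j"
    proof
      assume e: "y k = x j"
      then have "k = j" using Q.pair_disj[of k j "u (y k)"] uxy[of k] uxy[of j] kj by auto
      then show False using e pqne[of k] unfolding x_def y_def by (auto simp: min_def max_def split: if_splits)
    qed
  next
    fix k r assume "k < n" "r < N"
    show "A $$ (r, x k) - A $$ (r, y k) = c * ((if r = x k then 1 else 0) - (if r = y k then 1 else 0))"
    proof (cases "v (Q.sig (int k)) \<le> v (Q.sig (int k + int n))")
      case True
      then show ?thesis using key[OF \<open>r < N\<close>, of "int k"] unfolding x_def y_def by (simp add: min_def max_def)
    next
      case False
      then show ?thesis using key[OF \<open>r < N\<close>, of "int k"] unfolding x_def y_def
        by (simp add: min_def max_def algebra_simps)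
    qed
  qed
  have "eigenvalue A c"
    using ord assms(1) by (simp add: eigenvalue_root_char_poly[OF A] order_root)
  then show ?thesis using ord unfolding A_def c_def by simp
qed

end
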